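(* Let $q$ be an odd prime power, $\mathbb F_q$ the finite field of order $q$, $d$ a positive integer, and $A\subset \mathbb F_q^d$. Let $\mathcal{SQ}(A)$ be the number of pairs $(x,y)\in A\times A$ such that $\eta(\|x-y\|)=1$. \begin{enumerate} \item Let $d\equiv 3 \pmod 4$ and $q\equiv 3\pmod 4$. If $|A|\ge (q^{(d+1)/2}+q)/(1+q^{-(d-1)/2})$, then $$\mathcal{SQ}(A)\le \frac{|A|^2}{2} + q^{\frac{d-1}{2}} |A| -\frac{|A|^2}{2q}- \frac{|A|^2}{2 q^{\frac{d-1}{2}}} - \frac{|A|^2}{2 q^{\frac{d+1}{2}}}.$$ If $|A|\le (q^{(d+1)/2}+q)/(1+q^{-(d-1)/2})$, then $$\mathcal{SQ}(A) \le \frac{|A|^2}{2} + \frac{q^{\frac{d-1}{2}} |A|}{2} - \frac{|A|^2}{2 q^{\frac{d-1}{2}}} -\frac{|A|}{2}.$$ \item Let $d\equiv 1 \pmod 4$, or $d\equiv 3\pmod 4$ and $q\equiv 1\pmod 4$. Then $$\mathcal{SQ}(A) \le \frac{|A|^2}{2} - \frac{q^{\frac{d-1}{2}} |A|}{2} -\frac{|A|}{2}+ \min\left\{ \frac{q^{\frac{d+1}{2}} |A|}{2},~ \frac{q^{\frac{d-1}{2}} |A|}{2}+ \frac{|A|^2}{2},~\frac{|A|}{2}+ \frac{q^{\frac{d+1}{2}} |A|}{2}-\frac{|A|^2}{2q} \right\}.$$ \end{enumerate}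
   Context: For $x,y\in\mathbb F_q^d$, $\|x-y\|:=(x_1-y_1)^2+\cdots+(x_d-y_d)^2\in\mathbb F_q$. $\eta$ denotes the quadratic character of $\mathbb F_q$ (so $\eta(a)=1$ if $a$ is a nonzero square, $\eta(a)=-1$ if $a$ is a non-square) with the convention $\eta(0)=0$. *)

theory Defs
  imports "HOL-Analysis.Analysis"
begin

definition ffdist :: "'a::field ^ 'n \<Rightarrow> 'a ^ 'n \<Rightarrow> 'a" where
  "ffdist x y = (\<Sum>i\<in>UNIV. (x $ i - y $ i) ^ 2)"

definition qchar :: "'a::field \<Rightarrow> int" where
  "qchar a = (if a = 0 then 0 else if (\<exists>b. b ^ 2 = a) then 1 else -1)"

definition SQ :: "('a::field ^ 'n) set \<Rightarrow> nat" where
  "SQ A = card {(x, y). x \<in> A \<and> y \<in> A \<and> qchar (ffdist x y) = 1}"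

end

theory Submission
  imports Defs "HOL-Number_Theory.Residues" "HOL-Computational_Algebra.Polynomial"
begin

lemma two_neq0:
  assumes "odd CARD('a::{field,finite})"
  shows "(2::'a) \<noteq> 0"
proof
  assume "(2::'a) = 0"
  hence "of_nat 2 = (0::'a)" by simp
  hence d2: "CHAR('a) dvd 2" by (simp only: of_nat_eq_0_iff_char_dvd)
  have "CHAR('a) dvd CARD('a)" by (rule CHAR_dvd_CARD)
  hence "odd CHAR('a)" using assms by (meson dvd_trans)
  moreover have "CHAR('a) \<le> 2" using d2 by (rule dvd_imp_le) auto
  moreover have "CHAR('a) \<noteq> 0" using d2 by (metis dvd_0_left_iff zero_neq_numeral)
  ultimately have "CHAR('a) = 1" by presburger
  thus False by simp
qed

lemma fermat:
  fixes x :: "'a::{field,finite}"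
  assumes "x \<noteq> 0"
  shows "x ^ (CARD('a) - 1) = 1"
proof -
  have c: "card (UNIV - {0::'a}) = CARD('a) - 1" by (simp add: card_Diff_singleton)
  have "(\<Prod>y\<in>UNIV-{0}. x * y) = x ^ card (UNIV - {0::'a}) * \<Prod>(UNIV-{0})"
    by (simp add: prod.distrib)
  moreover have "(\<Prod>y\<in>UNIV-{0}. x * y) = (\<Prod>y\<in>UNIV-{0::'a}. y)"
    by (rule prod.reindex_bij_witness[of _ "\<lambda>y. y / x" "\<lambda>y. x * y"]) (use assms in auto)
  moreover have "\<Prod>(UNIV-{0::'a}) \<noteq> 0" by (simp add: prod_zero_iff)
  ultimately show ?thesis using c
    by (metis mult_cancel_right2)
qed

lemma card_ge3:
  assumes "odd CARD('a::{field,finite})"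
  shows "CARD('a) \<ge> 3"
proof -
  have "card {0::'a,1} \<le> CARD('a)" by (rule card_mono) auto
  hence "CARD('a) \<ge> 2" by simp
  thus ?thesis using assms by presburger
qed

lemma qchar_0 [simp]: "qchar 0 = 0" by (simp add: qchar_def)

lemma qchar_sq:
  fixes b :: "'a::field" assumes "b \<noteq> 0" shows "qchar (b^2) = 1"
  using assms by (auto simp: qchar_def)

lemma sqfib:
  assumes "odd CARD('a::{field,finite})"
  shows "card {x::'a. x^2 = u} = nat (1 + qchar u)"
proof (cases "u = 0")
  case True
  hence "{x::'a. x^2 = u} = {0}" by auto
  thus ?thesis using True by simp
next
  case u: False
  show ?thesis
  proof (cases "\<exists>b. b^2 = u")
    case True
    then obtain b where b: "b^2 = u" by blast
    have "x^2 = u \<longleftrightarrow> x = b \<or> x = -b" for x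
    proof -
      have "x^2 = u \<longleftrightarrow> (x - b) * (x + b) = 0" using b by (simp add: power2_eq_square algebra_simps)
      also have "\<dots> \<longleftrightarrow> x = b \<or> x = -b" by (auto simp: add_eq_0_iff2)
      finally show ?thesis .
    qed
    hence "{x::'a. x^2 = u} = {b, -b}" by auto
    moreover have "b \<noteq> -b"
    proof
      assume "b = -b"
      hence "2 * b = 0" by simp
      moreover have "b \<noteq> 0" using b u by auto
      ultimately show False using two_neq0[OF assms] by simp
    qed
    ultimately show ?thesis using True u by (simp add: qchar_def)
  next
    case False
    hence "{x::'a. x^2 = u} = {}" by auto
    thus ?thesis using False u by (simp add: qchar_def)
  qed
qed

lemma sum_sqfib:
  fixes f :: "'a::{field,finite} \<Rightarrow> 'b::comm_ring_1"
  shows "(\<Sum>x\<in>UNIV. f (x^2)) = (\<Sum>u\<in>UNIV. of_nat (card {x::'a. x^2 = u}) * f u)"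
proof -
  have "(\<Sum>x\<in>UNIV. f (x^2)) = (\<Sum>u\<in>UNIV. \<Sum>x\<in>{x\<in>UNIV. x^2 = u}. f (x^2))"
    by (rule sum.group[symmetric]) auto
  also have "\<dots> = (\<Sum>u\<in>UNIV. of_nat (card {x::'a. x^2 = u}) * f u)"
    by (intro sum.cong refl) simp
  finally show ?thesis .
qed

lemma sum_qchar:
  assumes "odd CARD('a::{field,finite})"
  shows "(\<Sum>u\<in>(UNIV::'a set). qchar u) = 0"
proof -
  have "(\<Sum>x\<in>(UNIV::'a set). (1::int)) = (\<Sum>u\<in>UNIV. of_nat (card {x::'a. x^2 = u}) * 1)"
    by (rule sum_sqfib)
  also have "\<dots> = (\<Sum>u\<in>UNIV. 1 + qchar (u::'a))"
  proof -
    have "int (card {x::'a. x^2 = u}) * 1 = 1 + qchar u" for u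
    proof -
      have "qchar u \<ge> -1" by (simp add: qchar_def)
      thus ?thesis using sqfib[OF assms, of u] by simp
    qed
    thus ?thesis by simp
  qed
  finally show ?thesis by (simp add: sum.distrib)
qed

definition sqset :: "'a::field set" where "sqset = {u. u \<noteq> 0 \<and> (\<exists>b. b^2 = u)}"

lemma card_sqset:
  assumes "odd CARD('a::{field,finite})"
  shows "2 * card (sqset::'a set) = CARD('a) - 1"
proof -
  have "(\<Sum>u\<in>sqset. \<Sum>x\<in>{x\<in>UNIV-{0::'a}. x^2 = u}. (1::nat)) = (\<Sum>x\<in>UNIV-{0::'a}. 1)"
    by (rule sum.group[where g = "\<lambda>x. x^2"]) (auto simp: sqset_def)
  hence "card (UNIV - {0::'a}) = (\<Sum>u\<in>sqset. card {x\<in>UNIV-{0::'a}. x^2 = u})"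
    by simp
  also have "\<dots> = (\<Sum>u\<in>(sqset::'a set). 2)"
  proof (intro sum.cong refl)
    fix u :: 'a assume "u \<in> sqset"
    hence u: "u \<noteq> 0" "\<exists>b. b^2 = u" by (auto simp: sqset_def)
    hence "{x\<in>UNIV-{0::'a}. x^2 = u} = {x. x^2 = u}" by auto
    thus "card {x\<in>UNIV-{0::'a}. x^2 = u} = 2" using sqfib[OF assms, of u] u by (simp add: qchar_def)
  qed
  finally show ?thesis by (simp add: card_Diff_singleton)
qed

lemma sq_pow:
  assumes "odd CARD('a::{field,finite})" and "b \<noteq> (0::'a)"
  shows "(b^2) ^ ((CARD('a) - 1) div 2) = 1"
proof -
  have "2 * ((CARD('a) - 1) div 2) = CARD('a) - 1" using assms(1) by presburger
  hence "(b^2) ^ ((CARD('a) - 1) div 2) = b ^ (CARD('a) - 1)" by (metis power_mult)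
  thus ?thesis using fermat[OF assms(2)] by simp
qed

lemma euler:
  assumes odd: "odd CARD('a::{field,finite})" and u: "u \<noteq> (0::'a)"
  shows "u ^ ((CARD('a) - 1) div 2) = of_int (qchar u)"
proof (cases "\<exists>b. b^2 = u")
  case True
  then obtain b where b: "b^2 = u" by blast
  hence "b \<noteq> 0" using u by auto
  thus ?thesis using sq_pow[OF odd, of b] b u True by (simp add: qchar_def)
next
  case False
  define r where "r = (CARD('a) - 1) div 2"
  have r2: "r * 2 = CARD('a) - 1" using odd unfolding r_def by presburger
  have r1: "r \<ge> 1" using card_ge3[OF odd] unfolding r_def by linarith
  have "(u^r)^2 = 1" using fermat[OF u] r2 by (metis power_mult)
  hence "(u^r - 1) * (u^r + 1) = 0" by (simp add: power2_eq_square algebra_simps)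
  hence pm: "u^r = 1 \<or> u^r = -1" by (auto simp: add_eq_0_iff2)
  have "u^r \<noteq> 1"
  proof
    assume ur: "u^r = 1"
    define p :: "'a poly" where "p = Polynomial.monom 1 r + [:-1:]"
    have dp: "degree p = r" unfolding p_def using r1
      by (subst degree_add_eq_left) (auto simp: degree_monom_eq)
    hence p0: "p \<noteq> 0" using r1 by auto
    have pp: "poly p x = x^r - 1" for x by (simp add: p_def poly_monom)
    have "insert u sqset \<subseteq> {x. poly p x = 0}"
    proof
      fix x assume "x \<in> insert u (sqset::'a set)"
      then show "x \<in> {x. poly p x = 0}"
      proof
        assume "x = u" thus ?thesis using ur pp by simp
      next
        assume "x \<in> sqset"
        then obtain b where "b \<noteq> 0" "x = b^2" by (auto simp: sqset_def)
        thus ?thesis using sq_pow[OF odd, of b] pp unfolding r_def by simp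
      qed
    qed
    hence "card (insert u sqset) \<le> card {x. poly p x = 0}" by (intro card_mono) auto
    also have "\<dots> \<le> r" using card_poly_roots_bound[OF p0] dp by simp
    finally have "card (insert u (sqset::'a set)) \<le> r" .
    moreover have "u \<notin> sqset" using False by (auto simp: sqset_def)
    moreover have "card (sqset::'a set) = r" using card_sqset[OF odd] r2 by simp
    ultimately show False by simp
  qed
  thus ?thesis using pm False u by (simp add: qchar_def r_def)
qed

lemma of_int_qchar_inj:
  assumes "odd CARD('a::{field,finite})" and "a \<in> {-1,0,1}" and "b \<in> {-1,0,1}"
  and "(of_int a :: 'a) = of_int b"
  shows "a = b"
proof -
  have t: "(2::'a) \<noteq> 0" by (rule two_neq0[OF assms(1)])
  have "(1::'a) \<noteq> -1" using t by (metis add_eq_0_iff2 one_add_one)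
  thus ?thesis using assms(2-4) by auto
qed

lemma qchar_range: "qchar u \<in> {-1,0,1}" by (simp add: qchar_def)

lemma qchar_mult:
  assumes odd: "odd CARD('a::{field,finite})"
  shows "qchar (u * v :: 'a) = qchar u * qchar v"
proof (cases "u = 0 \<or> v = 0")
  case True thus ?thesis by auto
next
  case False
  hence uv: "u * v \<noteq> 0" by simp
  have "(of_int (qchar (u * v)) :: 'a) = of_int (qchar u * qchar v)"
    using euler[OF odd uv] euler[OF odd, of u] euler[OF odd, of v] False
    by (simp add: power_mult_distrib)
  moreover have "qchar u * qchar v \<in> {-1,0,1}" using qchar_range[of u] qchar_range[of v] by auto
  ultimately show ?thesis using of_int_qchar_inj[OF odd qchar_range] by blast
qed

lemma qchar_minus1:
  assumes odd: "odd CARD('a::{field,finite})"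
  shows "qchar (-1::'a) = (if CARD('a) mod 4 = 1 then 1 else -1)"
proof -
  have e: "(-1::'a) ^ ((CARD('a) - 1) div 2) = of_int (qchar (-1::'a))" by (rule euler[OF odd]) simp
  show ?thesis
  proof (cases "CARD('a) mod 4 = 1")
    case True
    hence ev: "even ((CARD('a) - 1) div 2)" by presburger
    have h: "(of_int (qchar (-1::'a)) :: 'a) = of_int 1" using e ev by simp
    have "qchar (-1::'a) = 1" using of_int_qchar_inj[OF odd qchar_range _ h] by simp
    thus ?thesis using True by auto
  next
    case False
    hence ev: "odd ((CARD('a) - 1) div 2)" using odd by presburger
    have h: "(of_int (qchar (-1::'a)) :: 'a) = of_int (-1)" using e ev by simp
    have "qchar (-1::'a) = -1" using of_int_qchar_inj[OF odd qchar_range _ h] by simp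
    thus ?thesis using False by auto
  qed
qed

lemma qchar_sq_mult:
  assumes odd: "odd CARD('a::{field,finite})" and "t \<noteq> 0"
  shows "qchar (t^2 * u :: 'a) = qchar u"
  using assms by (simp add: qchar_mult qchar_sq)

lemma qchar_inverse:
  assumes odd: "odd CARD('a::{field,finite})"
  shows "qchar (inverse u :: 'a) = qchar u"
proof (cases "u = 0")
  case False
  have "inverse u = (inverse u)^2 * u" using False by (simp add: power2_eq_square)
  thus ?thesis using qchar_sq_mult[OF odd, of "inverse u" u] False by simp
qed simp

lemma qchar_sqr:
  "u \<noteq> 0 \<Longrightarrow> (qchar u)^2 = 1" by (simp add: qchar_def)

lemma char_inverse:
  assumes "\<not> int CHAR('a::{field,finite}) dvd j"
  shows "\<exists>u. (of_int u :: 'a) * of_int j = 1"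
proof -
  have "CHAR('a) > 0" by (rule finite_imp_CHAR_pos) simp
  hence pr: "prime CHAR('a)" by (rule prime_CHAR_semidom)
  hence "prime (int CHAR('a))" by simp
  hence "coprime (int CHAR('a)) j" using assms by (rule prime_imp_coprime)
  hence g: "gcd j (int CHAR('a)) = 1" by (simp add: coprime_iff_gcd_eq_1 gcd.commute)
  obtain u v where "u * j + v * int CHAR('a) = gcd j (int CHAR('a))" using bezout_int by blast
  hence "(of_int (u * j + v * int CHAR('a)) :: 'a) = 1" using g by simp
  hence "(of_int u :: 'a) * of_int j = 1" by simp
  thus ?thesis by blast
qed

definition goodsub :: "'a::field set \<Rightarrow> bool" where
  "goodsub H \<longleftrightarrow> 0 \<in> H \<and> (\<forall>x\<in>H. \<forall>y\<in>H. x + y \<in> H) \<and> (\<forall>x\<in>H. -x \<in> H) \<and> 1 \<notin> H"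

lemma goodsub_nat_mult:
  assumes "goodsub H" "h \<in> H" shows "of_nat n * h \<in> H"
  using assms by (induction n) (auto simp: goodsub_def algebra_simps)

lemma goodsub_int_mult:
  assumes "goodsub H" "h \<in> H" shows "of_int j * h \<in> H"
proof (cases "j \<ge> 0")
  case True
  hence "of_int j = (of_nat (nat j) :: 'a)" by simp
  thus ?thesis using goodsub_nat_mult[OF assms] by simp
next
  case False
  hence "of_int j * h = - (of_nat (nat (-j)) * h :: 'a)" by simp
  thus ?thesis using goodsub_nat_mult[OF assms] assms(1) unfolding goodsub_def by metis
qed

lemma addchar_exists:
  shows "\<exists>psi::'a::{field,finite} \<Rightarrow> complex. (\<forall>a b. psi (a+b) = psi a * psi b) \<and> (\<forall>a. norm (psi a) = 1) \<and> psi 1 \<noteq> 1"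
proof -
  define p where "p = CHAR('a)"
  have "CHAR('a) > 0" by (rule finite_imp_CHAR_pos) simp
  hence pr: "prime p" unfolding p_def by (rule prime_CHAR_semidom)
  hence p2: "p \<ge> 2" by (rule prime_ge_2_nat)
  define Gs where "Gs = {H::'a set. goodsub H}"
  have finGs: "finite Gs" unfolding Gs_def by (rule finite_subset[of _ "Pow UNIV"]) auto
  have "{0} \<in> Gs" unfolding Gs_def goodsub_def by auto
  hence ne: "card ` Gs \<noteq> {}" by auto
  define M where "M = Max (card ` Gs)"
  have "M \<in> card ` Gs" unfolding M_def using finGs ne by (intro Max_in) auto
  then obtain H where HG: "H \<in> Gs" and HM: "card H = M" by auto
  have good: "goodsub H" using HG unfolding Gs_def by simp
  have maxH: "card H' \<le> card H" if "goodsub H'" for H' :: "'a set"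
  proof -
    have "card H' \<in> card ` Gs" using that unfolding Gs_def by (intro imageI) simp
    thus ?thesis unfolding HM M_def using finGs by (intro Max_ge) auto
  qed
  have H0: "0 \<in> H" and Hadd: "\<And>x y. x \<in> H \<Longrightarrow> y \<in> H \<Longrightarrow> x + y \<in> H"
    and Hneg: "\<And>x. x \<in> H \<Longrightarrow> -x \<in> H" and H1: "1 \<notin> H"
    using good unfolding goodsub_def by auto
  have Hint: "\<And>j h. h \<in> H \<Longrightarrow> of_int j * h \<in> H" using goodsub_int_mult[OF good] by blast
  have ofint_mod: "(of_int (j mod int p) :: 'a) = of_int j" for j
  proof -
    have "int p dvd j - j mod int p" by (simp add: mod_eq_dvd_iff)
    hence "(of_int (j - j mod int p) :: 'a) = 0" unfolding p_def by (simp only: of_int_eq_0_iff_char_dvd)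
    thus ?thesis by simp
  qed
  have ofnat_mod: "(of_nat (n mod p) :: 'a) = of_nat n" for n
    using ofint_mod[of "int n"] by (metis of_int_of_nat_eq zmod_int)
  have claimA: "\<exists>k<p. y - of_nat k \<in> H" for y :: 'a
  proof (rule ccontr)
    assume nk: "\<not> (\<exists>k<p. y - of_nat k \<in> H)"
    hence yH: "y \<notin> H" using p2 by (metis diff_zero of_nat_0 pos2 order_less_le_trans)
    define H' where "H' = {h + of_int j * y | h j. h \<in> H}"
    have "H \<subseteq> H'"
    proof
      fix x assume "x \<in> H"
      thus "x \<in> H'" unfolding H'_def by (intro CollectI exI[of _ x] exI[of _ 0]) simp
    qed
    moreover have "y \<in> H'" unfolding H'_def using H0 by (intro CollectI exI[of _ 0] exI[of _ 1]) auto
    ultimately have "H \<subset> H'" using yH by blast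
    hence "card H < card H'" by (intro psubset_card_mono) auto
    hence "\<not> goodsub H'" using maxH by force
    moreover have "0 \<in> H'" unfolding H'_def using H0 by (intro CollectI exI[of _ 0] exI[of _ 0]) auto
    moreover have "\<forall>x\<in>H'. \<forall>z\<in>H'. x + z \<in> H'"
    proof (intro ballI)
      fix x z assume "x \<in> H'" "z \<in> H'"
      then obtain h1 j1 h2 j2 where "x = h1 + of_int j1 * y" "z = h2 + of_int j2 * y" "h1 \<in> H" "h2 \<in> H"
        unfolding H'_def by blast
      thus "x + z \<in> H'" unfolding H'_def using Hadd
        by (intro CollectI exI[of _ "h1 + h2"] exI[of _ "j1 + j2"]) (auto simp: algebra_simps)
    qed
    moreover have "\<forall>x\<in>H'. -x \<in> H'"
    proof (intro ballI)
      fix x assume "x \<in> H'"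
      then obtain h1 j1 where "x = h1 + of_int j1 * y" "h1 \<in> H"
        unfolding H'_def by blast
      thus "-x \<in> H'" unfolding H'_def using Hneg
        by (intro CollectI exI[of _ "- h1"] exI[of _ "- j1"]) (auto simp: algebra_simps)
    qed
    ultimately have "1 \<in> H'" unfolding goodsub_def by blast
    then obtain h j where hj: "1 = h + of_int j * y" "h \<in> H" unfolding H'_def by blast
    show False
    proof (cases "int p dvd j")
      case True
      hence "(of_int j :: 'a) = 0" unfolding p_def by (simp only: of_int_eq_0_iff_char_dvd)
      thus False using hj H1 by simp
    next
      case False
      then obtain u where u: "(of_int u :: 'a) * of_int j = 1" using char_inverse unfolding p_def by blast
      have e1: "(of_int u::'a) = of_int u * (h + of_int j * y)" by (simp add: hj(1)[symmetric])
      have e2: "(of_int u::'a) * (h + of_int j * y) = of_int u * h + (of_int u * of_int j) * y"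
        by (simp add: algebra_simps)
      have "(of_int u::'a) = of_int u * h + y" using e1 e2 u by simp
      hence ye: "y = of_int u - of_int u * h" by (simp add: algebra_simps)
      define k where "k = nat (u mod int p)"
      have kp: "k < p" unfolding k_def using p2 by (simp add: nat_less_iff)
      have "(of_nat k :: 'a) = of_int (u mod int p)" unfolding k_def using p2 by simp
      hence "(of_nat k :: 'a) = of_int u" using ofint_mod by simp
      hence "y - of_nat k = - (of_int u * h)" using ye by simp
      hence "y - of_nat k \<in> H" using Hneg Hint hj(2) by simp
      thus False using nk kp by blast
    qed
  qed
  have claimB: "k1 = k2" if "k1 < p" "k2 < p" "(of_nat k1 :: 'a) - of_nat k2 \<in> H" for k1 k2
  proof (rule ccontr)
    assume ne: "k1 \<noteq> k2"
    define j where "j = int k1 - int k2"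
    have j0: "j \<noteq> 0" using ne unfolding j_def by simp
    have "\<not> int p dvd j"
    proof
      assume "int p dvd j"
      hence "\<bar>int p\<bar> \<le> \<bar>j\<bar>" using j0 by (intro dvd_imp_le_int)
      thus False using that(1,2) unfolding j_def by linarith
    qed
    then obtain u where u: "(of_int u :: 'a) * of_int j = 1" using char_inverse unfolding p_def by blast
    have "(of_int j :: 'a) = of_nat k1 - of_nat k2" unfolding j_def by simp
    hence "of_int u * (of_int j :: 'a) \<in> H" using Hint that(3) by simp
    thus False using u H1 by simp
  qed
  define kap where "kap y = (THE k. k < p \<and> y - of_nat k \<in> H)" for y :: 'a
  have kap: "kap y < p \<and> y - of_nat (kap y) \<in> H" for y
  proof -
    obtain k where k: "k < p" "y - of_nat k \<in> H" using claimA by blast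
    have "\<exists>!k. k < p \<and> y - of_nat k \<in> H"
    proof (rule ex1I[of _ k])
      fix k' assume k': "k' < p \<and> y - of_nat k' \<in> H"
      have "(y - of_nat k) + - (y - of_nat k') \<in> H" using k k' Hadd Hneg by blast
      hence "(of_nat k' :: 'a) - of_nat k \<in> H" by (simp add: algebra_simps)
      thus "k' = k" using claimB k k' by blast
    qed (use k in auto)
    thus ?thesis unfolding kap_def by (rule theI')
  qed
  have kap_unique: "kap y = k" if "k < p" "y - of_nat k \<in> H" for y k
  proof -
    have "(y - of_nat k) + - (y - of_nat (kap y)) \<in> H" using that kap[of y] Hadd Hneg by blast
    hence "(of_nat (kap y) :: 'a) - of_nat k \<in> H" by (simp add: algebra_simps)
    thus ?thesis using claimB kap[of y] that by blast
  qed
  have kap_add: "kap (y + z) = (kap y + kap z) mod p" for y z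
  proof (rule kap_unique)
    show "(kap y + kap z) mod p < p" using p2 by simp
    have eq: "(y + z) - of_nat ((kap y + kap z) mod p) = (y - of_nat (kap y)) + (z - of_nat (kap z))"
      using ofnat_mod[of "kap y + kap z"] by simp
    have mem: "(y - of_nat (kap y)) + (z - of_nat (kap z)) \<in> H" using kap Hadd by blast
    show "(y + z) - of_nat ((kap y + kap z) mod p) \<in> H" unfolding eq by (rule mem)
  qed
  have kap1: "kap 1 = 1" using p2 by (intro kap_unique) (auto simp: H0)
  define w where "w = cis (2 * pi / p)"
  have wp: "w ^ p = 1"
  proof -
    have "w ^ p = cis (real p * (2*pi/p))" unfolding w_def by (rule Complex.DeMoivre)
    moreover have "real p * (2*pi/p) = 2*pi" using p2 by simp
    ultimately show ?thesis by simp
  qed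
  have wmod: "w ^ n = w ^ (n mod p)" for n
  proof -
    have "w ^ n = w ^ (p * (n div p) + n mod p)" by simp
    also have "\<dots> = (w ^ p) ^ (n div p) * w ^ (n mod p)" by (simp only: power_add power_mult)
    finally show ?thesis using wp by simp
  qed
  have w1: "w \<noteq> 1"
  proof
    assume "w = 1"
    hence "cos (2 * pi / p) = 1" unfolding w_def by (metis cis.sel(1) one_complex.sel(1))
    then obtain n :: int where n: "2 * pi / p = real_of_int n * 2 * pi" using cos_one_2pi_int by blast
    have "1 / real p = (2*pi/p) / (2*pi)" using pi_gt_zero by (simp add: field_simps)
    also have "\<dots> = real_of_int n" unfolding n using pi_gt_zero by simp
    finally have "1 / real p = real_of_int n" .
    moreover have "0 < 1 / real p" "1 / real p < 1" using p2 by auto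
    ultimately show False by (metis of_int_0_less_iff of_int_less_1_iff not_less zero_less_one_class.zero_le_one int_one_le_iff_zero_less of_int_less_iff of_int_1 linorder_not_le)
  qed
  define psi where "psi y = w ^ kap y" for y
  have "\<forall>a b. psi (a+b) = psi a * psi b"
    unfolding psi_def using kap_add wmod by (simp add: power_add)
  moreover have "\<forall>a. norm (psi a) = 1" unfolding psi_def w_def by (simp add: norm_power)
  moreover have "psi 1 \<noteq> 1" unfolding psi_def kap1 using w1 by simp
  ultimately show ?thesis by blast
qed

definition chi :: "'a::field \<Rightarrow> complex" where "chi u = of_int (qchar u)"

locale fq =
  fixes psi :: "'a::{field,finite} \<Rightarrow> complex"
  assumes odd: "odd CARD('a)"
  and psi_add: "\<And>a b. psi (a + b) = psi a * psi b"
  and psi_norm: "\<And>a. norm (psi a) = 1"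
  and psi_1: "psi 1 \<noteq> 1"
begin

definition q :: complex where "q = of_nat CARD('a)"
definition g :: complex where "g = (\<Sum>u\<in>UNIV. chi u * psi u)"

lemma psi_0 [simp]: "psi 0 = 1"
proof -
  have "psi 0 = psi 0 * psi 0" using psi_add[of 0 0] by simp
  moreover have "psi 0 \<noteq> 0" using psi_norm[of 0] by auto
  ultimately show ?thesis by simp
qed

lemma psi_minus: "psi (-a) = cnj (psi a)"
proof -
  have "psi a * psi (-a) = 1" using psi_add[of a "-a"] by simp
  moreover have "psi a * cnj (psi a) = 1"
    using complex_norm_square[of "psi a"] psi_norm[of a] by simp
  moreover have "psi a \<noteq> 0" using psi_norm[of a] by auto
  ultimately show ?thesis by (metis mult_left_cancel)
qed

lemma psi_diff: "psi (a - b) = psi a * cnj (psi b)"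
  using psi_add[of a "-b"] psi_minus[of b] by simp

lemma psi_sum: "psi (sum f S) = (\<Prod>i\<in>S. psi (f i))"
  by (induction S rule: infinite_finite_induct) (auto simp: psi_add)

lemma sum_bij_UNIV:
  fixes h :: "'b::finite \<Rightarrow> 'b" and F :: "'b \<Rightarrow> 'c::comm_monoid_add"
  assumes "\<And>x. h (k x) = x" "\<And>x. k (h x) = x"
  shows "(\<Sum>x\<in>UNIV. F (h x)) = (\<Sum>x\<in>UNIV. F x)"
  by (rule sum.reindex_bij_witness[of _ k h]) (use assms in auto)

lemma orth: "(\<Sum>t\<in>UNIV. psi (a * t)) = (if a = 0 then q else 0)"
proof (cases "a = 0")
  case True thus ?thesis by (simp add: q_def)
next
  case False
  have "(\<Sum>t\<in>UNIV. psi (a * t)) = (\<Sum>t\<in>UNIV. psi t)"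
    by (rule sum_bij_UNIV[of _ "\<lambda>t. t / a"]) (use False in auto)
  moreover have "psi 1 * (\<Sum>t\<in>UNIV. psi t) = (\<Sum>t\<in>UNIV. psi t)"
  proof -
    have "psi 1 * (\<Sum>t\<in>UNIV. psi t) = (\<Sum>t\<in>UNIV. psi (1 + t))"
      by (simp add: sum_distrib_left psi_add)
    also have "\<dots> = (\<Sum>t\<in>UNIV. psi t)"
      by (rule sum_bij_UNIV[of _ "\<lambda>t. t - 1"]) auto
    finally show ?thesis .
  qed
  ultimately show ?thesis using False psi_1 by auto
qed

lemma orth': "(\<Sum>t\<in>UNIV. psi (t * a)) = (if a = 0 then q else 0)"
  using orth[of a] by (simp add: mult.commute)

lemma chi_mult: "chi (u * v :: 'a) = chi u * chi v"
  unfolding chi_def by (simp add: qchar_mult[OF odd])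

lemma chi_0 [simp]: "chi (0::'a) = 0" by (simp add: chi_def)
lemma chi_1 [simp]: "chi (1::'a) = 1" using qchar_sq[of "1::'a"] by (simp add: chi_def)

lemma chi_inverse: "chi (inverse u :: 'a) = chi u"
  unfolding chi_def by (simp add: qchar_inverse[OF odd])

lemma chi_sq_mult: "t \<noteq> 0 \<Longrightarrow> chi (t^2 * u :: 'a) = chi u"
  unfolding chi_def by (simp add: qchar_sq_mult[OF odd])

lemma chi_sqr: "u \<noteq> (0::'a) \<Longrightarrow> chi u * chi u = 1"
  unfolding chi_def using qchar_sqr[of u] by (metis of_int_1 of_int_mult power2_eq_square)

lemma chi_m1_sqr: "chi (-1::'a) * chi (-1::'a) = 1" by (rule chi_sqr) simp

lemma sum_chi: "(\<Sum>u\<in>UNIV. chi (u::'a)) = 0"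
  unfolding chi_def using sum_qchar[OF odd] by (metis of_int_0 of_int_sum)

lemma F1: "(\<Sum>s\<in>UNIV. chi s * psi (s * c)) = chi c * g"
proof (cases "c = 0")
  case True thus ?thesis using sum_chi by simp
next
  case False
  have "(\<Sum>s\<in>UNIV. chi s * psi (s * c)) = (\<Sum>u\<in>UNIV. chi (u * inverse c) * psi (u * inverse c * c))"
    by (rule sum_bij_UNIV[symmetric, of _ "\<lambda>s. s * c"]) (use False in auto)
  also have "\<dots> = (\<Sum>u\<in>UNIV. chi c * (chi u * psi u))"
    using False by (intro sum.cong refl) (simp add: chi_mult chi_inverse mult.assoc)
  finally show ?thesis by (simp add: g_def sum_distrib_left)
qed

lemma Gc:
  assumes "c \<noteq> 0"
  shows "(\<Sum>t\<in>UNIV. psi (c * t^2)) = chi c * g"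
proof -
  have "(\<Sum>t\<in>UNIV. psi (c * t^2)) = (\<Sum>u\<in>UNIV. of_nat (card {x::'a. x^2 = u}) * psi (c * u))"
    by (rule sum_sqfib)
  also have "\<dots> = (\<Sum>u\<in>UNIV. psi (c * u) + chi u * psi (u * c))"
  proof (intro sum.cong refl)
    fix u :: 'a
    have "qchar u \<ge> -1" by (simp add: qchar_def)
    hence "(of_nat (card {x::'a. x^2 = u}) :: complex) = 1 + chi u"
      using sqfib[OF odd, of u] unfolding chi_def by (simp add: of_nat_nat)
    thus "of_nat (card {x::'a. x^2 = u}) * psi (c * u) = psi (c * u) + chi u * psi (u * c)"
      by (simp add: algebra_simps)
  qed
  also have "\<dots> = chi c * g" using assms by (simp add: sum.distrib orth F1)
  finally show ?thesis .
qed

lemma gsq: "g * g = chi (-1::'a) * q"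
proof -
  have g1: "(\<Sum>x\<in>UNIV. psi (x^2)) = g" using Gc[of 1] by simp
  have g2: "(\<Sum>y\<in>UNIV. psi (- (y^2))) = chi (-1::'a) * g" using Gc[of "-1"] by simp
  have t2: "(2::'a) \<noteq> 0" by (rule two_neq0[OF odd])
  have t4: "(4::'a) \<noteq> 0"
  proof
    assume "(4::'a) = 0"
    hence "(2::'a) * 2 = 0" by simp
    thus False using t2 no_zero_divisors by blast
  qed
  have "(\<Sum>x\<in>UNIV. psi (x^2)) * (\<Sum>y\<in>UNIV. psi (- (y^2))) = (\<Sum>x\<in>UNIV. \<Sum>y\<in>UNIV. psi ((x + y) * (x - y)))"
    by (simp add: sum_product psi_add[symmetric] algebra_simps power2_eq_square)
  also have "\<dots> = (\<Sum>(x,y)\<in>UNIV. psi ((x + y) * (x - y)))"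
    by (simp add: sum.cartesian_product)
  also have "\<dots> = (\<Sum>(a,b)\<in>UNIV. psi (a * b))"
    by (rule sum.reindex_bij_witness[of _ "\<lambda>(a,b). ((a+b)/2, (a-b)/2)" "\<lambda>(x,y). (x+y, x-y)"])
       (use t2 t4 in \<open>auto simp: field_simps\<close>)
  also have "\<dots> = (\<Sum>a\<in>UNIV. \<Sum>b\<in>UNIV. psi (a * b))"
    by (simp add: sum.cartesian_product)
  also have "\<dots> = q" by (simp add: orth)
  finally have "g * (chi (-1::'a) * g) = q" using g1 g2 by simp
  hence "chi (-1::'a) * (g * (chi (-1::'a) * g)) = chi (-1::'a) * q" by simp
  thus ?thesis using chi_m1_sqr by (simp add: algebra_simps)
qed

lemma q_nz: "q \<noteq> 0" by (simp add: q_def)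

lemma g_nz: "g \<noteq> 0"
proof
  assume "g = 0"
  hence "chi (-1::'a) * q = 0" using gsq by simp
  thus False using q_nz chi_m1_sqr by auto
qed

end

definition dot :: "'a::field^'n \<Rightarrow> 'a^'n \<Rightarrow> 'a" where "dot m v = (\<Sum>i\<in>UNIV. m$i * v$i)"
definition nrm :: "'a::field^'n \<Rightarrow> 'a" where "nrm v = (\<Sum>i\<in>UNIV. (v$i)^2)"

lemma ffdist_nrm: "ffdist x y = nrm (x - y)" by (simp add: ffdist_def nrm_def)

lemma dot_diff: "dot m (x - y) = dot m x - dot m y"
  by (simp add: dot_def sum_subtractf right_diff_distrib)

lemma dot_0 [simp]: "dot 0 x = 0" by (simp add: dot_def)

lemma prodsum_vec:
  fixes f :: "'n::finite \<Rightarrow> 'a::finite \<Rightarrow> 'c::comm_semiring_1"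
  shows "(\<Sum>m\<in>(UNIV::('a^'n) set). \<Prod>i\<in>UNIV. f i (m$i)) = (\<Prod>i\<in>UNIV. \<Sum>t\<in>UNIV. f i t)"
proof -
  have "(\<Prod>i\<in>UNIV. \<Sum>t\<in>UNIV. f i t) = (\<Sum>h\<in>PiE UNIV (\<lambda>_. UNIV). \<Prod>i\<in>UNIV. f i (h i))"
    by (rule prod_sum_PiE) auto
  also have "\<dots> = (\<Sum>h\<in>UNIV. \<Prod>i\<in>UNIV. f i (h i))" by simp
  also have "\<dots> = (\<Sum>m\<in>(UNIV::('a^'n) set). \<Prod>i\<in>UNIV. f i (m$i))"
    by (rule sum.reindex_bij_witness[of _ vec_nth vec_lambda]) auto
  finally show ?thesis by simp
qed

definition Ahat :: "('a \<Rightarrow> complex) \<Rightarrow> ('a::field^'n) set \<Rightarrow> 'a^'n \<Rightarrow> complex" where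
  "Ahat psi A m = (\<Sum>x\<in>A. psi (dot m x))"

definition RR :: "('a \<Rightarrow> complex) \<Rightarrow> ('a::field^'n) set \<Rightarrow> 'a^'n \<Rightarrow> real" where
  "RR psi A m = (cmod (Ahat psi A m))^2"

context fq
begin

lemma orth_vec:
  fixes w :: "'a^'n"
  shows "(\<Sum>m\<in>UNIV. psi (dot m w)) = (if w = 0 then q ^ CARD('n) else 0)"
proof -
  have "(\<Sum>m\<in>UNIV. psi (dot m w)) = (\<Sum>m\<in>(UNIV::('a^'n) set). \<Prod>i\<in>UNIV. psi (w$i * m$i))"
    by (simp add: dot_def psi_sum mult.commute)
  also have "\<dots> = (\<Prod>i\<in>UNIV. \<Sum>t\<in>UNIV. psi (w$i * t))" by (rule prodsum_vec)
  also have "\<dots> = (\<Prod>i\<in>UNIV. if w$i = 0 then q else 0)" by (simp add: orth)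
  also have "\<dots> = (if w = 0 then q ^ CARD('n) else 0)"
  proof (cases "w = 0")
    case True thus ?thesis by simp
  next
    case False
    then obtain i where "w$i \<noteq> 0" by (auto simp: vec_eq_iff)
    hence "(\<Prod>i\<in>UNIV. if w$i = 0 then q else 0) = 0" by (intro prod_zero) auto
    thus ?thesis using False by simp
  qed
  finally show ?thesis .
qed

lemma four_nz: "(4::'a) \<noteq> 0"
proof
  assume "(4::'a) = 0"
  hence "(2::'a) * 2 = 0" by simp
  thus False using two_neq0[OF odd] no_zero_divisors by blast
qed

lemma psi_sq1:
  assumes s: "s \<noteq> 0"
  shows "(\<Sum>t\<in>UNIV. psi (t * b - t^2/(4 * s))) = psi (s * b^2) * (chi (-s) * g)"
proof -
  define c where "c = - inverse (4 * s)"
  have t2: "(2::'a) \<noteq> 0" by (rule two_neq0[OF odd])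
  have id: "t * b - t^2/(4 * s) = c * (t - 2 * s * b)^2 + s * b^2" for t
    unfolding c_def using s four_nz t2 by (simp add: field_simps power2_eq_square)
  have "(\<Sum>t\<in>UNIV. psi (t * b - t^2/(4 * s))) = (\<Sum>t\<in>UNIV. psi (c * (t - 2 * s * b)^2) * psi (s * b^2))"
    by (intro sum.cong refl) (simp only: id psi_add)
  also have "\<dots> = (\<Sum>t\<in>UNIV. psi (c * t^2)) * psi (s * b^2)"
    by (subst sum_bij_UNIV[of "\<lambda>t. t - 2 * s * b" "\<lambda>t. t + 2 * s * b"]) (auto simp: sum_distrib_right)
  also have "(\<Sum>t\<in>UNIV. psi (c * t^2)) = chi c * g"
    by (rule Gc) (use s four_nz in \<open>simp add: c_def\<close>)
  also have "chi c = chi (-s)"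
  proof -
    have "c = (inverse (2 * s))^2 * (-s)" unfolding c_def using s t2
      by (simp add: field_simps power2_eq_square)
    hence "chi c = chi ((inverse (2 * s))^2 * (-s))" by (rule arg_cong)
    also have "\<dots> = chi (-s)" by (rule chi_sq_mult) (use s t2 in simp)
    finally show ?thesis .
  qed
  finally show ?thesis by (simp add: algebra_simps)
qed

lemma key1:
  fixes w :: "'a^'n"
  assumes s: "s \<noteq> 0"
  shows "(chi (-s) * g) ^ CARD('n) * psi (s * nrm w) = (\<Sum>m\<in>UNIV. psi (-(nrm m)/(4 * s)) * psi (dot m w))"
proof -
  have e: "dot m w - nrm m/(4 * s) = (\<Sum>i\<in>UNIV. m$i * w$i - (m$i)^2/(4 * s))" for m :: "'a^'n"
    by (simp add: nrm_def dot_def sum.distrib sum_divide_distrib sum_negf sum_subtractf)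
  have "(\<Sum>m\<in>UNIV. psi (-(nrm m)/(4 * s)) * psi (dot m w))
      = (\<Sum>m\<in>(UNIV::('a^'n) set). \<Prod>i\<in>UNIV. psi (m$i * w$i - (m$i)^2/(4 * s)))"
    by (simp add: psi_add[symmetric] e psi_sum)
  also have "\<dots> = (\<Prod>i\<in>UNIV. \<Sum>t\<in>UNIV. psi (t * w$i - t^2/(4 * s)))" by (rule prodsum_vec)
  also have "\<dots> = (\<Prod>i\<in>(UNIV::'n set). psi (s * (w$i)^2) * (chi (-s) * g))"
    using s by (simp add: psi_sq1)
  also have "\<dots> = (chi (-s) * g) ^ CARD('n) * psi (s * nrm w)"
    by (simp add: prod.distrib nrm_def sum_distrib_left psi_sum mult.commute)
  finally show ?thesis by simp
qed

lemma pair_R: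
  "(\<Sum>x\<in>A. \<Sum>y\<in>A. psi (dot m (x - y))) = of_real (RR psi A m)"
proof -
  have "(\<Sum>x\<in>A. \<Sum>y\<in>A. psi (dot m (x - y))) = (\<Sum>x\<in>A. \<Sum>y\<in>A. psi (dot m x) * cnj (psi (dot m y)))"
    by (simp add: dot_diff psi_diff)
  also have "\<dots> = Ahat psi A m * cnj (Ahat psi A m)"
    by (simp add: Ahat_def sum_product)
  also have "\<dots> = of_real (RR psi A m)" by (simp only: RR_def complex_norm_square)
  finally show ?thesis .
qed

lemma K_formula:
  fixes A :: "('a^'n) set"
  assumes s: "s \<noteq> 0"
  shows "(chi (-s) * g) ^ CARD('n) * (\<Sum>x\<in>A. \<Sum>y\<in>A. psi (s * nrm (x - y)))
       = (\<Sum>m\<in>UNIV. psi (-(nrm m)/(4 * s)) * of_real (RR psi A m))"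
proof -
  have "(chi (-s) * g) ^ CARD('n) * (\<Sum>x\<in>A. \<Sum>y\<in>A. psi (s * nrm (x - y)))
      = (\<Sum>x\<in>A. \<Sum>y\<in>A. \<Sum>m\<in>UNIV. psi (-(nrm m)/(4 * s)) * psi (dot m (x - y)))"
    by (simp add: sum_distrib_left key1[OF s])
  also have "\<dots> = (\<Sum>m\<in>UNIV. psi (-(nrm m)/(4 * s)) * (\<Sum>x\<in>A. \<Sum>y\<in>A. psi (dot m (x - y))))"
    by (simp add: sum_distrib_left sum.swap[where A = UNIV])
  also have "\<dots> = (\<Sum>m\<in>UNIV. psi (-(nrm m)/(4 * s)) * of_real (RR psi A m))"
    by (simp add: pair_R)
  finally show ?thesis .
qed

lemma parseval:
  fixes A :: "('a^'n) set"
  shows "(\<Sum>m\<in>UNIV. of_real (RR psi A m)) = q ^ CARD('n) * of_nat (card A)"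
proof -
  have "(\<Sum>m\<in>UNIV. of_real (RR psi A m)) = (\<Sum>m\<in>UNIV. \<Sum>x\<in>A. \<Sum>y\<in>A. psi (dot m (x - y)))"
    by (simp add: pair_R)
  also have "\<dots> = (\<Sum>x\<in>A. \<Sum>y\<in>A. \<Sum>m\<in>UNIV. psi (dot m (x - y)))"
    by (simp add: sum.swap[where A = UNIV])
  also have "\<dots> = (\<Sum>x\<in>A. \<Sum>y\<in>A. if x = y then q ^ CARD('n) else 0)"
    by (simp add: orth_vec)
  also have "\<dots> = q ^ CARD('n) * of_nat (card A)" by simp
  finally show ?thesis .
qed

lemma RR_0: "RR psi A 0 = (real (card A))^2"
  by (simp add: RR_def Ahat_def)

lemma RR_nonneg: "RR psi A m \<ge> 0" by (simp add: RR_def)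

end

context fq
begin

lemma sum_inv: "(\<Sum>s\<in>UNIV-{0}. psi (c * inverse s)) = (if c = 0 then q else 0) - 1"
proof -
  have "(\<Sum>s\<in>UNIV-{0}. psi (c * inverse s)) = (\<Sum>u\<in>UNIV-{0}. psi (c * u))"
    by (rule sum.reindex_bij_witness[of _ inverse inverse]) auto
  also have "\<dots> = (\<Sum>u\<in>UNIV. psi (c * u)) - psi (c * 0)"
    using sum.remove[of UNIV 0 "\<lambda>u. psi (c * u)"] by simp
  finally show ?thesis by (simp add: orth)
qed

lemma chi_neg: "chi (- u :: 'a) = chi (-1::'a) * chi u"
  using chi_mult[of "-1" u] by simp

lemma sum_chi_inv: "(\<Sum>s\<in>UNIV-{0}. chi (-s) * psi (c * inverse s)) = chi (-1::'a) * chi c * g"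
proof -
  have "(\<Sum>s\<in>UNIV-{0}. chi (-s) * psi (c * inverse s)) = (\<Sum>u\<in>UNIV-{0}. chi (- inverse u) * psi (c * u))"
    by (rule sum.reindex_bij_witness[of _ inverse inverse]) auto
  also have "\<dots> = (\<Sum>u\<in>UNIV-{0}. chi (-1::'a) * (chi u * psi (u * c)))"
    by (intro sum.cong refl) (simp add: chi_neg[of "inverse _"] chi_inverse mult.commute)
  also have "\<dots> = chi (-1::'a) * ((\<Sum>u\<in>UNIV. chi u * psi (u * c)) - chi (0::'a) * psi (0 * c))"
    using sum.remove[of UNIV 0 "\<lambda>u. chi u * psi (u * c)"] by (simp add: sum_distrib_left)
  finally show ?thesis by (simp add: F1)
qed

lemma chi_pow_odd:
  assumes "odd k" "u \<noteq> (0::'a)"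
  shows "chi u ^ k = chi u"
proof -
  obtain j where k: "k = 2 * j + 1" using assms(1) oddE by blast
  have "chi u ^ k = (chi u * chi u) ^ j * chi u" unfolding k by (simp add: power_mult power2_eq_square)
  thus ?thesis using chi_sqr[OF assms(2)] by simp
qed

lemma gK:
  fixes A :: "('a^'n) set"
  assumes d: "odd CARD('n)" and s: "s \<noteq> 0"
  shows "g ^ CARD('n) * (\<Sum>x\<in>A. \<Sum>y\<in>A. psi (s * nrm (x - y)))
       = chi (-s) * (\<Sum>m\<in>UNIV. psi (-(nrm m)/(4 * s)) * of_real (RR psi A m))"
proof -
  have s': "-s \<noteq> 0" using s by simp
  have "chi (-s) * (g ^ CARD('n) * (\<Sum>x\<in>A. \<Sum>y\<in>A. psi (s * nrm (x - y))))
      = (\<Sum>m\<in>UNIV. psi (-(nrm m)/(4 * s)) * of_real (RR psi A m))"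
    using K_formula[OF s, of A] chi_pow_odd[OF d s'] by (simp add: power_mult_distrib mult.assoc)
  hence "chi (-s) * (chi (-s) * (g ^ CARD('n) * (\<Sum>x\<in>A. \<Sum>y\<in>A. psi (s * nrm (x - y)))))
      = chi (-s) * (\<Sum>m\<in>UNIV. psi (-(nrm m)/(4 * s)) * of_real (RR psi A m))" by simp
  thus ?thesis using chi_sqr[OF s'] by (simp add: mult.assoc[symmetric])
qed

lemma E_formula:
  fixes A :: "('a^'n) set"
  assumes d: "odd CARD('n)"
  shows "g ^ (CARD('n) + 1) * (\<Sum>x\<in>A. \<Sum>y\<in>A. chi (nrm (x - y)))
       = chi (-1::'a) * (\<Sum>m\<in>UNIV. ((if nrm m = 0 then q else 0) - 1) * of_real (RR psi A m))"
proof -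
  define K where "K s = (\<Sum>x\<in>A. \<Sum>y\<in>A. psi (s * nrm (x - y)))" for s
  define M where "M s = (\<Sum>m\<in>UNIV. psi (-(nrm m)/(4 * s)) * of_real (RR psi A m))" for s
  have "g * (\<Sum>x\<in>A. \<Sum>y\<in>A. chi (nrm (x - y))) = (\<Sum>x\<in>A. \<Sum>y\<in>A. \<Sum>s\<in>UNIV. chi s * psi (s * nrm (x - y)))"
    by (simp add: F1 sum_distrib_left mult.commute)
  also have "\<dots> = (\<Sum>s\<in>UNIV. chi s * K s)"
    unfolding K_def by (simp add: sum_distrib_left sum.swap[where B = UNIV])
  finally have gE: "g * (\<Sum>x\<in>A. \<Sum>y\<in>A. chi (nrm (x - y))) = (\<Sum>s\<in>UNIV. chi s * K s)" .
  have "g ^ (CARD('n) + 1) * (\<Sum>x\<in>A. \<Sum>y\<in>A. chi (nrm (x - y))) = g ^ CARD('n) * (\<Sum>s\<in>UNIV. chi s * K s)"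
    using gE by (simp add: mult.assoc)
  also have "\<dots> = (\<Sum>s\<in>UNIV. if s = 0 then 0 else chi (-1::'a) * M s)"
    unfolding sum_distrib_left
  proof (intro sum.cong refl)
    fix s :: 'a
    show "g ^ CARD('n) * (chi s * K s) = (if s = 0 then 0 else chi (-1::'a) * M s)"
    proof (cases "s = 0")
      case False
      have "g ^ CARD('n) * (chi s * K s) = chi s * (g ^ CARD('n) * K s)" by (simp add: algebra_simps)
      also have "\<dots> = chi s * (chi (-s) * M s)" unfolding K_def M_def using gK[OF d False] by simp
      also have "\<dots> = chi (-1::'a) * M s * (chi s * chi s)" by (simp add: chi_neg[of s] algebra_simps)
      finally show ?thesis using chi_sqr[OF False] False by simp
    qed simp
  qed
  also have "\<dots> = chi (-1::'a) * (\<Sum>s\<in>UNIV-{0}. M s)"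
    by (simp add: sum.If_cases sum_distrib_left Compl_eq_Diff_UNIV)
  also have "(\<Sum>s\<in>UNIV-{0}. M s) = (\<Sum>m\<in>UNIV. (\<Sum>s\<in>UNIV-{0}. psi ((-(nrm m)/4) * inverse s)) * of_real (RR psi A m))"
    unfolding M_def by (subst sum.swap) (simp add: sum_distrib_left sum_distrib_right field_simps)
  also have "\<dots> = (\<Sum>m\<in>UNIV. ((if nrm m = 0 then q else 0) - 1) * of_real (RR psi A m))"
    unfolding sum_inv using four_nz by simp
  finally show ?thesis .
qed

lemma Z_formula:
  fixes A :: "('a^'n) set"
  assumes d: "odd CARD('n)"
  shows "g ^ CARD('n) * (q * (\<Sum>x\<in>A. \<Sum>y\<in>A. if nrm (x - y) = 0 then 1 else 0) - of_nat (card A) ^ 2)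
       = g * (\<Sum>m\<in>UNIV. chi (nrm m) * of_real (RR psi A m))"
proof -
  define K where "K s = (\<Sum>x\<in>A. \<Sum>y\<in>A. psi (s * nrm (x - y)))" for s
  define M where "M s = (\<Sum>m\<in>UNIV. psi (-(nrm m)/(4 * s)) * of_real (RR psi A m))" for s
  have "q * (\<Sum>x\<in>A. \<Sum>y\<in>A. if nrm (x - y) = 0 then 1 else 0) = (\<Sum>x\<in>A. \<Sum>y\<in>A. \<Sum>s\<in>UNIV. psi (s * nrm (x - y)))"
    by (simp add: orth' sum_distrib_left if_distrib cong: if_cong)
  also have "\<dots> = (\<Sum>s\<in>UNIV. K s)"
    unfolding K_def by (simp add: sum.swap[where B = UNIV])
  also have "\<dots> = K 0 + (\<Sum>s\<in>UNIV-{0}. K s)" by (simp add: sum.remove[of UNIV 0])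
  also have "K 0 = of_nat (card A) ^ 2" unfolding K_def by (simp add: power2_eq_square)
  finally have qZ: "q * (\<Sum>x\<in>A. \<Sum>y\<in>A. if nrm (x - y) = 0 then 1 else 0) - of_nat (card A) ^ 2 = (\<Sum>s\<in>UNIV-{0}. K s)"
    by simp
  have "g ^ CARD('n) * (\<Sum>s\<in>UNIV-{0}. K s) = (\<Sum>s\<in>UNIV-{0}. g ^ CARD('n) * K s)"
    by (simp add: sum_distrib_left)
  also have "\<dots> = (\<Sum>s\<in>UNIV-{0}. chi (-s) * M s)"
  proof (intro sum.cong refl)
    fix s :: 'a assume "s \<in> UNIV-{0}"
    hence s: "s \<noteq> 0" by simp
    show "g ^ CARD('n) * K s = chi (-s) * M s" unfolding K_def M_def by (rule gK[OF d s])
  qed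
  also have "\<dots> = (\<Sum>s\<in>UNIV-{0}. \<Sum>m\<in>UNIV. chi (-s) * psi (-(nrm m)/(4 * s)) * of_real (RR psi A m))"
    unfolding M_def by (simp add: sum_distrib_left mult.assoc)
  also have "\<dots> = (\<Sum>m\<in>UNIV. \<Sum>s\<in>UNIV-{0}. chi (-s) * psi (-(nrm m)/(4 * s)) * of_real (RR psi A m))"
    by (rule sum.swap)
  also have "\<dots> = (\<Sum>m\<in>UNIV. (\<Sum>s\<in>UNIV-{0}. chi (-s) * psi ((-(nrm m)/4) * inverse s)) * of_real (RR psi A m))"
    by (simp add: sum_distrib_left sum_distrib_right field_simps)
  also have "\<dots> = (\<Sum>m\<in>UNIV. chi (-1::'a) * chi (-(nrm m)/4) * g * of_real (RR psi A m))"
    unfolding sum_chi_inv by (rule refl)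
  also have "\<dots> = (\<Sum>m\<in>UNIV. g * (chi (nrm m) * of_real (RR psi A m)))"
  proof (intro sum.cong refl)
    fix m :: "'a^'n"
    have t2: "(2::'a) \<noteq> 0" by (rule two_neq0[OF odd])
    have "-(nrm m)/4 = (inverse 2)^2 * (- nrm m)" by (simp add: field_simps power2_eq_square)
    hence "chi (-(nrm m)/4) = chi ((inverse 2)^2 * (- nrm m))" by (rule arg_cong)
    also have "\<dots> = chi (- nrm m)" by (rule chi_sq_mult) (use t2 in simp)
    finally have "chi (-(nrm m)/4) = chi (- nrm m)" .
    also have "chi (- nrm m) = chi (-1::'a) * chi (nrm m)" by (rule chi_neg)
    finally have "chi (-1::'a) * chi (-(nrm m)/4) = (chi (-1::'a) * chi (-1::'a)) * chi (nrm m)"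
      by (simp only: mult.assoc)
    hence "chi (-1::'a) * chi (-(nrm m)/4) = chi (nrm m)" by (simp only: chi_m1_sqr mult_1)
    thus "chi (-1::'a) * chi (-(nrm m)/4) * g * of_real (RR psi A m) = g * (chi (nrm m) * of_real (RR psi A m))"
      by (simp add: algebra_simps)
  qed
  finally have X: "g ^ CARD('n) * (\<Sum>s\<in>UNIV-{0}. K s) = (\<Sum>m\<in>UNIV. g * (chi (nrm m) * of_real (RR psi A m)))" .
  have Y: "(\<Sum>m\<in>UNIV. g * (chi (nrm m) * of_real (RR psi A m))) = g * (\<Sum>m\<in>UNIV. chi (nrm m) * of_real (RR psi A m))"
    by (rule sum_distrib_left[symmetric])
  show ?thesis using qZ X Y by metis
qed

end

lemma SQ_sum:
  fixes A :: "('a::{field,finite}^'n) set"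
  shows "real (SQ A) = (\<Sum>x\<in>A. \<Sum>y\<in>A. if qchar (ffdist x y) = 1 then 1 else 0)"
proof -
  have fin: "finite (A \<times> A)" by simp
  have "{(x, y). x \<in> A \<and> y \<in> A \<and> qchar (ffdist x y) = 1} = {p \<in> A \<times> A. qchar (ffdist (fst p) (snd p)) = 1}"
    by auto
  hence "SQ A = card {p \<in> A \<times> A. qchar (ffdist (fst p) (snd p)) = 1}" by (simp add: SQ_def)
  hence "real (SQ A) = (\<Sum>p\<in>{p \<in> A \<times> A. qchar (ffdist (fst p) (snd p)) = 1}. 1)"
    by (simp only: real_of_card)
  also have "\<dots> = (\<Sum>p\<in>A \<times> A. if qchar (ffdist (fst p) (snd p)) = 1 then 1 else 0)"
    by (rule sum.inter_filter[OF fin])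
  also have "\<dots> = (\<Sum>x\<in>A. \<Sum>y\<in>A. if qchar (ffdist x y) = 1 then 1 else 0)"
    by (simp add: sum.cartesian_product split_def)
  finally show ?thesis .
qed

lemma pt1: "2 * (if qchar c = 1 then 1 else 0) = real_of_int (qchar c) + 1 - (if c = 0 then 1 else 0)"
  by (simp add: qchar_def)

lemma pt2: "(if qchar (ffdist x x) = 1 then 1 else (0::real)) = 0"
  by (simp add: ffdist_def)

context fq
begin

lemma real_facts:
  fixes A :: "('a^'n) set"
  assumes d: "odd CARD('n)"
  defines "qr \<equiv> real CARD('a)" and "u \<equiv> real CARD('a) ^ ((CARD('n) - 1) div 2)"
    and "N \<equiv> real (card A)" and "a \<equiv> real_of_int (qchar (-1::'a))"
    and "S \<equiv> real (SQ A)"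
  shows "\<exists>E Z P T Q. T = qr * u * u * N \<and> N^2 \<le> P \<and> P \<le> T \<and> -(T - P) \<le> Q \<and> Q \<le> T - P
     \<and> a ^ ((CARD('n) - 1) div 2) * qr * u * E = qr * P - T
     \<and> a ^ ((CARD('n) - 1) div 2) * u * (qr * Z - N^2) = Q
     \<and> 2 * S = N^2 - Z + E \<and> 2 * S \<le> N^2 - N + E \<and> S \<le> N^2 - N"
proof -
  define h where "h = (CARD('n) - 1) div 2"
  have dh: "CARD('n) = 2 * h + 1" unfolding h_def using d by presburger
  define E where "E = (\<Sum>x\<in>A. \<Sum>y\<in>A. real_of_int (qchar (nrm (x - y))))"
  define Z where "Z = (\<Sum>x\<in>A. \<Sum>y\<in>A. if nrm (x - y) = 0 then 1 else (0::real))"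
  define P where "P = (\<Sum>m\<in>UNIV. if nrm m = 0 then RR psi A m else 0)"
  define T where "T = (\<Sum>m\<in>UNIV. RR psi A m)"
  define Q where "Q = (\<Sum>m\<in>UNIV. real_of_int (qchar (nrm m)) * RR psi A m)"
  have a2: "a * a = 1" unfolding a_def by (simp add: qchar_def)
  have gg: "g * g = of_real (a * qr)" using gsq unfolding a_def qr_def chi_def q_def by simp
  have qrpos: "qr > 0" unfolding qr_def by simp
  have "of_real T = q ^ CARD('n) * of_nat (card A)" unfolding T_def using parseval[of A] by simp
  hence "of_real T = (of_real (qr ^ CARD('n) * N) :: complex)" unfolding qr_def q_def N_def by simp
  hence "T = qr ^ CARD('n) * N" by (rule of_real_eq_iff[THEN iffD1])
  hence Teq: "T = qr * u * u * N" unfolding dh u_def h_def[symmetric] qr_def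
    by (simp add: power_add power_mult power2_eq_square algebra_simps)
  have n0: "nrm (0::'a^'n) = 0" by (simp add: nrm_def)
  have "(\<lambda>m. if nrm m = 0 then RR psi A m else 0) 0 \<le> P" unfolding P_def
    by (rule member_le_sum) (auto simp: RR_nonneg)
  hence "RR psi A 0 \<le> P" using n0 by simp
  hence P1: "N^2 \<le> P" using RR_0[of A] unfolding N_def by linarith
  have P2: "P \<le> T" unfolding P_def T_def by (intro sum_mono) (simp add: RR_nonneg)
  have TP: "T - P = (\<Sum>m\<in>UNIV. if nrm m = 0 then 0 else RR psi A m)"
    unfolding T_def P_def sum_subtractf[symmetric] by (intro sum.cong refl) simp
  have Q1: "-(T - P) \<le> Q" unfolding TP Q_def sum_negf[symmetric]
  proof (intro sum_mono)
    fix m :: "'a^'n"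
    show "- (if nrm m = 0 then 0 else RR psi A m) \<le> real_of_int (qchar (nrm m)) * RR psi A m"
      using RR_nonneg[of A m] by (auto simp: qchar_def)
  qed
  have Q2: "Q \<le> T - P" unfolding TP Q_def
  proof (intro sum_mono)
    fix m :: "'a^'n"
    show "real_of_int (qchar (nrm m)) * RR psi A m \<le> (if nrm m = 0 then 0 else RR psi A m)"
      using RR_nonneg[of A m] by (auto simp: qchar_def)
  qed
  have Ec: "g ^ (CARD('n) + 1) * of_real E = of_real (a * (qr * P - T))"
  proof -
    have "g ^ (CARD('n) + 1) * of_real E = g ^ (CARD('n) + 1) * (\<Sum>x\<in>A. \<Sum>y\<in>A. chi (nrm (x - y)))"
      unfolding E_def chi_def by simp
    also have "\<dots> = chi (-1::'a) * (\<Sum>m\<in>UNIV. ((if nrm m = 0 then q else 0) - 1) * of_real (RR psi A m))"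
      by (rule E_formula[OF d])
    also have "(\<Sum>m\<in>UNIV. ((if nrm m = 0 then q else 0) - 1) * of_real (RR psi A m))
        = of_real (\<Sum>m\<in>UNIV. ((if nrm m = 0 then qr else 0) - 1) * RR psi A m)"
      unfolding of_real_sum by (intro sum.cong refl) (auto simp: q_def qr_def)
    also have "(\<Sum>m\<in>UNIV. ((if nrm m = 0 then qr else 0) - 1) * RR psi A m) = qr * P - T"
      unfolding P_def T_def sum_distrib_left sum_subtractf[symmetric] by (intro sum.cong refl) (auto simp: algebra_simps)
    finally show ?thesis unfolding a_def chi_def by simp
  qed
  have gpow: "g ^ (CARD('n) + 1) = of_real ((a * qr) ^ (h + 1))"
  proof -
    have "g ^ (CARD('n) + 1) = (g * g) ^ (h + 1)" unfolding dh
      by (simp add: power_mult[symmetric] power2_eq_square[symmetric] algebra_simps)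
    thus ?thesis using gg by simp
  qed
  have "of_real ((a * qr) ^ (h + 1) * E) = (of_real (a * (qr * P - T)) :: complex)"
    using Ec unfolding gpow by simp
  hence "(a * qr) ^ (h + 1) * E = a * (qr * P - T)" by (rule of_real_eq_iff[THEN iffD1])
  hence "a * (a ^ h * qr * u * E) = a * (qr * P - T)"
    unfolding u_def qr_def h_def by (simp add: power_mult_distrib algebra_simps)
  hence "a * (a * (a ^ h * qr * u * E)) = a * (a * (qr * P - T))" by simp
  hence Eeq: "a ^ h * qr * u * E = qr * P - T" using a2 by (simp add: mult.assoc[symmetric])
  have Zc: "g ^ CARD('n) * (q * of_real Z - of_real (N^2)) = g * of_real Q"
  proof -
    have "g ^ CARD('n) * (q * of_real Z - of_real (N^2))
        = g ^ CARD('n) * (q * (\<Sum>x\<in>A. \<Sum>y\<in>A. if nrm (x - y) = 0 then 1 else 0) - of_nat (card A) ^ 2)"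
      unfolding Z_def N_def by (simp add: if_distrib cong: if_cong)
    also have "\<dots> = g * (\<Sum>m\<in>UNIV. chi (nrm m) * of_real (RR psi A m))" by (rule Z_formula[OF d])
    also have "\<dots> = g * of_real Q" unfolding Q_def chi_def by simp
    finally show ?thesis .
  qed
  have "g * ((g * g) ^ h * (q * of_real Z - of_real (N^2))) = g * of_real Q"
    using Zc unfolding dh by (simp add: power_mult[symmetric] power2_eq_square[symmetric] algebra_simps)
  hence "(g * g) ^ h * (q * of_real Z - of_real (N^2)) = of_real Q" using g_nz by simp
  hence "of_real ((a * qr) ^ h * (qr * Z - N^2)) = (of_real Q :: complex)"
    using gg unfolding q_def qr_def by simp
  hence "(a * qr) ^ h * (qr * Z - N^2) = Q" by (rule of_real_eq_iff[THEN iffD1])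
  hence Zeq: "a ^ h * u * (qr * Z - N^2) = Q" unfolding u_def qr_def h_def by (simp add: power_mult_distrib)
  have S2: "2 * S = N^2 - Z + E"
  proof -
    have "2 * S = (\<Sum>x\<in>A. \<Sum>y\<in>A. 2 * (if qchar (ffdist x y) = 1 then 1 else 0))"
      unfolding S_def SQ_sum by (simp add: sum_distrib_left)
    also have "\<dots> = (\<Sum>x\<in>A. \<Sum>y\<in>A. 1 - (if nrm (x - y) = 0 then 1 else 0) + real_of_int (qchar (nrm (x - y))))"
      by (intro sum.cong refl) (simp add: pt1 ffdist_nrm)
    also have "\<dots> = N^2 - Z + E"
      unfolding Z_def E_def N_def by (simp add: sum.distrib sum_subtractf power2_eq_square)
    finally show ?thesis .
  qed
  have Zge: "N \<le> Z"
  proof -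
    have "N = (\<Sum>x\<in>A. if nrm (x - x) = 0 then 1 else (0::real))" unfolding N_def by (simp add: nrm_def)
    also have "\<dots> \<le> Z" unfolding Z_def
      by (intro sum_mono member_le_sum) auto
    finally show ?thesis .
  qed
  have S3: "S \<le> N^2 - N"
  proof -
    have "S = (\<Sum>x\<in>A. \<Sum>y\<in>A. if qchar (ffdist x y) = 1 then 1 else 0)" unfolding S_def SQ_sum ..
    also have "\<dots> \<le> (\<Sum>x\<in>A. \<Sum>y\<in>A. 1 - (if x = y then 1 else 0))"
      by (intro sum_mono) (auto simp: ffdist_def)
    also have "\<dots> = N^2 - N" unfolding N_def by (simp add: sum_subtractf power2_eq_square algebra_simps)
    finally show ?thesis .
  qed
  show ?thesis
    apply (rule exI[of _ E], rule exI[of _ Z], rule exI[of _ P], rule exI[of _ T], rule exI[of _ Q])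
    using Teq P1 P2 Q1 Q2 Eeq Zeq S2 Zge S3 unfolding h_def by auto
qed

end

lemma finA_B1:
  fixes q u N E P T S :: real
  assumes "q > 0" "u > 0" "T = q*u*u*N" "P \<le> T" "q*u*E = q*P - T" "2*S \<le> N^2 - N + E"
  shows "S \<le> N^2/2 - u*N/2 - N/2 + q*u*N/2"
proof -
  have "q*u*E \<le> q*u*(q*u*N - u*N)"
  proof -
    have "q*P \<le> q*T" using assms(1,4) by simp
    thus ?thesis using assms(3,5) by (simp add: algebra_simps)
  qed
  hence "E \<le> q*u*N - u*N" using assms(1,2) by simp
  thus ?thesis using assms(6) by (simp add: algebra_simps)
qed

lemma finA_B3:
  fixes q u N E P T S Z Q :: real
  assumes "q > 0" "u > 0" "q \<ge> 1" "T = q*u*u*N" "P \<le> T" "Q \<ge> -(T - P)" "q*u*E = q*P - T"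
     "u*(q*Z - N^2) = Q" "2*S = N^2 - Z + E"
  shows "S \<le> N^2/2 - u*N/2 - N/2 + (N/2 + q*u*N/2 - N^2/(2*q))"
proof -
  have k1: "u*q*Z = Q + u*N^2" using assms(8) by (simp add: algebra_simps)
  have k2: "q*u*(2*S) = q*u*N^2 - u*q*Z + q*u*E" unfolding assms(9) by (simp add: algebra_simps)
  have k3: "(q-1)*P \<le> (q-1)*T" using assms(3,5) by (intro mult_left_mono) auto
  have "q*u*(2*S) \<le> q*u*N^2 - u*N^2 + (q-1)*T" using k1 k2 k3 assms(6,7) by (simp add: algebra_simps)
  also have "\<dots> = q*u*(2*(N^2/2 - u*N/2 - N/2 + (N/2 + q*u*N/2 - N^2/(2*q))))"
    using assms(1,4) by (simp add: field_simps power2_eq_square)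
  finally have "q*u*(2*S) \<le> q*u*(2*(N^2/2 - u*N/2 - N/2 + (N/2 + q*u*N/2 - N^2/(2*q))))" .
  hence "2*S \<le> 2*(N^2/2 - u*N/2 - N/2 + (N/2 + q*u*N/2 - N^2/(2*q)))"
    using assms(1,2) by (simp only: mult_le_cancel_left_pos zero_less_mult_iff) simp
  thus ?thesis by simp
qed

lemma finB_1:
  fixes q u N E P T S Z Q :: real
  assumes "q > 0" "u > 0" "q \<ge> 1" "T = q*u*u*N" "N^2 \<le> P" "P \<le> T" "Q \<le> T - P" "q*u*E = T - q*P"
     "u*(q*Z - N^2) = -Q" "2*S = N^2 - Z + E"
  shows "S \<le> N^2/2 + u*N - N^2/(2*q) - N^2/(2*u) - N^2/(2*(q*u))"
proof -
  have k1: "u*q*Z = u*N^2 - Q"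
  proof -
    have "u*q*Z = u*(q*Z - N^2) + u*N^2" by (simp add: algebra_simps)
    thus ?thesis using assms(9) by simp
  qed
  have k2: "q*u*(2*S) = q*u*N^2 - u*q*Z + q*u*E" unfolding assms(10) by (simp add: algebra_simps)
  have k3: "(q+1)*N^2 \<le> (q+1)*P" using assms(1,5) by (intro mult_left_mono) auto
  have "q*u*(2*S) \<le> q*u*N^2 - u*N^2 + 2*T - (q+1)*N^2" using k1 k2 k3 assms(7,8) by (simp add: algebra_simps)
  also have "\<dots> = q*u*(2*(N^2/2 + u*N - N^2/(2*q) - N^2/(2*u) - N^2/(2*(q*u))))"
    using assms(1,2,4) by (simp add: field_simps power2_eq_square)
  finally have "q*u*(2*S) \<le> q*u*(2*(N^2/2 + u*N - N^2/(2*q) - N^2/(2*u) - N^2/(2*(q*u))))" .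
  hence "2*S \<le> 2*(N^2/2 + u*N - N^2/(2*q) - N^2/(2*u) - N^2/(2*(q*u)))"
    using assms(1,2) by (simp only: mult_le_cancel_left_pos zero_less_mult_iff) simp
  thus ?thesis by simp
qed

lemma finB_2:
  fixes q u N E P T S :: real
  assumes "q > 0" "u > 0" "T = q*u*u*N" "N^2 \<le> P" "q*u*E = T - q*P" "2*S \<le> N^2 - N + E"
  shows "S \<le> N^2/2 + u*N/2 - N^2/(2*u) - N/2"
proof -
  have "q*u*E \<le> q*(u*u*N - N^2)"
  proof -
    have "q*N^2 \<le> q*P" using assms(1,4) by simp
    thus ?thesis using assms(3,5) by (simp add: algebra_simps)
  qed
  hence "u*E \<le> u*u*N - N^2" using assms(1) by (simp add: mult.assoc)
  moreover have "u*(u*N - N^2/u) = u*u*N - N^2" using assms(2) by (simp add: right_diff_distrib)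
  ultimately have "u*E \<le> u*(u*N - N^2/u)" by simp
  hence "E \<le> u*N - N^2/u" using assms(2) by simp
  thus ?thesis using assms(6) by (simp add: field_simps)
qed


theorem theorem1p4:
  fixes A :: "('a::{field, finite} ^ 'n) set"
  assumes "odd CARD('a)"
  defines "q \<equiv> real CARD('a)" and "d \<equiv> CARD('n)" and "N \<equiv> real (card A)"
  shows
   "(d mod 4 = 3 \<and> CARD('a) mod 4 = 3 \<longrightarrow>
      (N \<ge> (q ^ ((d + 1) div 2) + q) / (1 + 1 / q ^ ((d - 1) div 2)) \<longrightarrow>
        real (SQ A) \<le> N^2 / 2 + q ^ ((d - 1) div 2) * N - N^2 / (2 * q)
           - N^2 / (2 * q ^ ((d - 1) div 2)) - N^2 / (2 * q ^ ((d + 1) div 2))) \<and>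
      (N \<le> (q ^ ((d + 1) div 2) + q) / (1 + 1 / q ^ ((d - 1) div 2)) \<longrightarrow>
        real (SQ A) \<le> N^2 / 2 + q ^ ((d - 1) div 2) * N / 2
           - N^2 / (2 * q ^ ((d - 1) div 2)) - N / 2))
    \<and>
    (d mod 4 = 1 \<or> (d mod 4 = 3 \<and> CARD('a) mod 4 = 1) \<longrightarrow>
      real (SQ A) \<le> N^2 / 2 - q ^ ((d - 1) div 2) * N / 2 - N / 2
        + Min {q ^ ((d + 1) div 2) * N / 2,
               q ^ ((d - 1) div 2) * N / 2 + N^2 / 2,
               N / 2 + q ^ ((d + 1) div 2) * N / 2 - N^2 / (2 * q)})"
proof -
  have oddq: "odd CARD('a)" by fact
  have qd: "q = real CARD('a)" using assms by simp
  have dd: "d = CARD('n)" using assms by simp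
  have Nd: "N = real (card A)" using assms by simp
  obtain psi :: "'a \<Rightarrow> complex" where ps: "\<forall>a b. psi (a+b) = psi a * psi b" "\<forall>a. norm (psi a) = 1" "psi 1 \<noteq> 1"
    using addchar_exists by blast
  have inst: "fq psi" by unfold_locales (use oddq ps in auto)
  define h where "h = (d - 1) div 2"
  define u where "u = q ^ h"
  define a where "a = real_of_int (qchar (-1::'a))"
  define S where "S = real (SQ A)"
  have q3: "q \<ge> 3" unfolding qd using card_ge3[OF oddq] by simp
  have upos: "u > 0" unfolding u_def using q3 by simp
  have N0: "N \<ge> 0" unfolding Nd by simp
  have a2: "a * a = 1" unfolding a_def by (simp add: qchar_def)
  have facts: "\<exists>E Z P T Q. T = q * u * u * N \<and> N^2 \<le> P \<and> P \<le> T \<and> -(T - P) \<le> Q \<and> Q \<le> T - P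
     \<and> a ^ h * q * u * E = q * P - T \<and> a ^ h * u * (q * Z - N^2) = Q
     \<and> 2 * S = N^2 - Z + E \<and> 2 * S \<le> N^2 - N + E \<and> S \<le> N^2 - N" if "odd d"
    using fq.real_facts[OF inst, of A] that unfolding qd dd Nd u_def h_def a_def S_def by simp
  have hp: "(d + 1) div 2 = h + 1" if "odd d" unfolding h_def using that by presburger
  have part1: "real (SQ A) \<le> N^2 / 2 + q ^ ((d - 1) div 2) * N - N^2 / (2 * q)
           - N^2 / (2 * q ^ ((d - 1) div 2)) - N^2 / (2 * q ^ ((d + 1) div 2)) \<and>
        real (SQ A) \<le> N^2 / 2 + q ^ ((d - 1) div 2) * N / 2
           - N^2 / (2 * q ^ ((d - 1) div 2)) - N / 2" if c: "d mod 4 = 3 \<and> CARD('a) mod 4 = 3"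
  proof -
    have od: "odd d" using c by presburger
    have am: "a = -1" unfolding a_def using qchar_minus1[OF oddq] c by simp
    have ho: "odd h" unfolding h_def using c by presburger
    hence ah: "a ^ h = -1" using am by simp
    obtain E Z P T Q where F: "T = q * u * u * N" "N^2 \<le> P" "P \<le> T" "-(T - P) \<le> Q" "Q \<le> T - P"
      "a ^ h * q * u * E = q * P - T" "a ^ h * u * (q * Z - N^2) = Q"
      "2 * S = N^2 - Z + E" "2 * S \<le> N^2 - N + E" "S \<le> N^2 - N"
      using facts[OF od] by blast
    have E': "q * u * E = T - q * P" using F(6) ah by simp
    have Z': "u * (q * Z - N^2) = - Q" using F(7) ah by simp
    have qh: "q ^ ((d + 1) div 2) = q * u" unfolding hp[OF od] u_def by simp
    have r1: "real (SQ A) \<le> N^2 / 2 + q ^ ((d - 1) div 2) * N - N^2 / (2 * q)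
           - N^2 / (2 * q ^ ((d - 1) div 2)) - N^2 / (2 * q ^ ((d + 1) div 2))"
      using finB_1[of q u T N P Q E Z S] q3 upos F E' Z' unfolding qh u_def[symmetric] h_def[symmetric] S_def by simp
    have r2: "real (SQ A) \<le> N^2 / 2 + q ^ ((d - 1) div 2) * N / 2
           - N^2 / (2 * q ^ ((d - 1) div 2)) - N / 2"
      using finB_2[of q u T N P E S] q3 upos F E' unfolding qh u_def[symmetric] h_def[symmetric] S_def by simp
    show ?thesis using r1 r2 by blast
  qed
  have part2: "real (SQ A) \<le> N^2 / 2 - q ^ ((d - 1) div 2) * N / 2 - N / 2
        + Min {q ^ ((d + 1) div 2) * N / 2,
               q ^ ((d - 1) div 2) * N / 2 + N^2 / 2,
               N / 2 + q ^ ((d + 1) div 2) * N / 2 - N^2 / (2 * q)}"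
    if c: "d mod 4 = 1 \<or> (d mod 4 = 3 \<and> CARD('a) mod 4 = 1)"
  proof -
    have od: "odd d" using c by presburger
    have ah: "a ^ h = 1"
    proof (cases "d mod 4 = 1")
      case True
      hence "even h" unfolding h_def by presburger
      then obtain k where "h = 2 * k" by blast
      thus ?thesis using a2 by (simp add: power_mult power2_eq_square)
    next
      case False
      hence "a = 1" unfolding a_def using qchar_minus1[OF oddq] c by simp
      thus ?thesis by simp
    qed
    obtain E Z P T Q where F: "T = q * u * u * N" "N^2 \<le> P" "P \<le> T" "-(T - P) \<le> Q" "Q \<le> T - P"
      "a ^ h * q * u * E = q * P - T" "a ^ h * u * (q * Z - N^2) = Q"
      "2 * S = N^2 - Z + E" "2 * S \<le> N^2 - N + E" "S \<le> N^2 - N"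
      using facts[OF od] by blast
    have E': "q * u * E = q * P - T" using F(6) ah by simp
    have Z': "u * (q * Z - N^2) = Q" using F(7) ah by simp
    have qh: "q ^ ((d + 1) div 2) = q * u" unfolding hp[OF od] u_def by simp
    have b1: "S \<le> N^2/2 - u*N/2 - N/2 + q*u*N/2"
      using finA_B1[of q u T N P E S] q3 upos F E' by simp
    have b2: "S \<le> N^2/2 - u*N/2 - N/2 + (u*N/2 + N^2/2)" using F(10) N0 by simp
    have b3: "S \<le> N^2/2 - u*N/2 - N/2 + (N/2 + q*u*N/2 - N^2/(2*q))"
      using finA_B3[of q u T N P Q E Z S] q3 upos F E' Z' by simp
    have mn: "Min {q*u*N/2, u*N/2 + N^2/2, N/2 + q*u*N/2 - N^2/(2*q)}
       = min (q*u*N/2) (min (u*N/2 + N^2/2) (N/2 + q*u*N/2 - N^2/(2*q)))" by simp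
    have "S \<le> N^2/2 - u*N/2 - N/2 + Min {q*u*N/2, u*N/2 + N^2/2, N/2 + q*u*N/2 - N^2/(2*q)}"
      unfolding mn using b1 b2 b3 by linarith
    thus ?thesis
      unfolding qh u_def[symmetric] h_def[symmetric] S_def by simp
  qed
  show ?thesis using part1 part2 by blast
qed

end
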